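(* Let $\rho$ be an $n$-qubit state, fix a threshold $\varepsilon\ge0$, and let $A_1,\dots,A_t\in\mathrm{GL}(n,2)$ be the gauges queried so far, $A_r$ with columns $\mathbf{a}_{r,1},\dots,\mathbf{a}_{r,n}$. Let $Q_t=\{\mathbf{a}_{r,i}:r\le t,\ i\le n\}$, $\mathcal{F}_t=\{p\in\Delta(\mathbb{F}_2^n):\widehat p(\mathbf{u})=\mu_\rho(\mathbf{u})\ \forall\mathbf{u}\in Q_t\}$, and let $p_t^-\in\arg\min_{p\in\mathcal{F}_t}p(\mathbf{0})$, $p_t^+\in\arg\max_{p\in\mathcal{F}_t}p(\mathbf{0})$ be any endpoint optimizers, $W_t=p_t^+(\mathbf{0})-p_t^-(\mathbf{0})$. Define $d_t(\mathbf{u})=|\widehat{p_t^+}(\mathbf{u})-\widehat{p_t^-}(\mathbf{u})|$ for $\mathbf{u}\neq\mathbf{0}$, $M_t=(\mathbb{F}_2^n\setminus\{\mathbf{0}\})\setminus Q_t$, $m_t=|M_t|$, $D_t=\sum_{\mathbf{u}\in M_t}d_t(\mathbf{u})$, $\Delta_t=\max_{\mathbf{u}\in M_t}d_t(\mathbf{u})$. For a gauge $A$ with columns $\mathbf{a}_1,\dots,\mathbf{a}_n$ put $\Phi_t(A)=\sum_{i=1}^n d_t(\mathbf{a}_i)$, let $\Gamma_t=\{A\in\mathrm{GL}(n,2): \{\mathbf{a}_1,\dots,\mathbf{a}_n\}\not\subseteq Q_t\}$, and let $A_{t+1}\in\arg\max_{A\in\Gamma_t}\Phi_t(A)$. Suppose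 round $t$ is nonterminal, i.e. $W_t>\varepsilon$. Then $$W_t\le 2^{-n}D_t\le\frac{m_t}{2^n}\Delta_t,\qquad\text{and}\qquad \Phi_t(A_{t+1})\ge\Delta_t\ge\frac{2^n}{m_t}W_t.$$
   Context: Setting: $|\psi\rangle$ is an $n$-qubit stabilizer state whose stabilizer group is generated by independent commuting Pauli operators $g_1,\dots,g_n$; $g(\mathbf{u})=\prod_j g_j^{u_j}$ for $\mathbf{u}\in\mathbb{F}_2^n$. Syndrome projectors $\Pi_{\mathbf{s}}=2^{-n}\prod_j(I+(-1)^{s_j}g_j)$ are orthogonal rank-one projectors summing to identity with $\Pi_{\mathbf{0}}=|\psi\rangle\langle\psi|$. $p_\rho(\mathbf{s})=\mathrm{tr}(\rho\Pi_{\mathbf{s}})$, $\mu_\rho(\mathbf{u})=\mathrm{tr}(\rho g(\mathbf{u}))=\widehat{p_\rho}(\mathbf{u})$ with Walsh transform $\widehat p(\mathbf{u})=\sum_{\mathbf{s}}(-1)^{\mathbf{u}\cdot\mathbf{s}}p(\mathbf{s})$ (mod-2 inner product). $\Delta(\mathbb{F}_2^n)$ is the set of probability distributions on $\mathbb{F}_2^n$; $\mathrm{GL}(n,2)$ the invertible binary $n\times n$ matrices, whose columns are called the labels queried by that gauge. *)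

theory Defs
  imports "HOL-Analysis.Analysis" "HOL-Library.Z2"
begin

text \<open>Vectors of F_2^n are modelled as bit ^ 'n, where the finite index type 'n
  has CARD('n) = n elements. Gauges are invertible matrices bit ^ 'n ^ 'n,
  and the labels queried by a gauge A are its columns, column i A.\<close>

definition f2dot :: "bit ^ 'n \<Rightarrow> bit ^ 'n \<Rightarrow> bit" where
  "f2dot u s = (\<Sum>i\<in>UNIV. u $ i * s $ i)"

definition walsh :: "(bit ^ 'n \<Rightarrow> real) \<Rightarrow> bit ^ 'n \<Rightarrow> real" where
  "walsh p u = (\<Sum>s\<in>UNIV. (if f2dot u s = 0 then 1 else -1) * p s)"

definition prob_dist :: "(bit ^ 'n \<Rightarrow> real) \<Rightarrow> bool" where
  "prob_dist p \<longleftrightarrow> (\<forall>s. 0 \<le> p s) \<and> (\<Sum>s\<in>UNIV. p s) = 1"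

definition queried :: "(nat \<Rightarrow> bit ^ 'n ^ 'n) \<Rightarrow> nat \<Rightarrow> (bit ^ 'n) set" where
  "queried As t = {column i (As r) | r i. r \<in> {1..t}}"

definition feasible :: "(bit ^ 'n \<Rightarrow> real) \<Rightarrow> (bit ^ 'n) set \<Rightarrow> (bit ^ 'n \<Rightarrow> real) set" where
  "feasible prho Q = {p. prob_dist p \<and> (\<forall>u\<in>Q. walsh p u = walsh prho u)}"

definition gap :: "(bit ^ 'n \<Rightarrow> real) \<Rightarrow> (bit ^ 'n \<Rightarrow> real) \<Rightarrow> bit ^ 'n \<Rightarrow> real" where
  "gap pplus pminus u = \<bar>walsh pplus u - walsh pminus u\<bar>"

definition missing :: "(bit ^ 'n) set \<Rightarrow> (bit ^ 'n) set" where
  "missing Q = (UNIV - {0}) - Q"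

definition score :: "(bit ^ 'n \<Rightarrow> real) \<Rightarrow> (bit ^ 'n \<Rightarrow> real) \<Rightarrow> bit ^ 'n ^ 'n \<Rightarrow> real" where
  "score pplus pminus A = (\<Sum>i\<in>UNIV. gap pplus pminus (column i A))"

definition candidates :: "(bit ^ 'n) set \<Rightarrow> (bit ^ 'n ^ 'n) set" where
  "candidates Q = {A. invertible A \<and> \<not> (columns A \<subseteq> Q)}"

end

theory Submission imports Defs begin
lemma bit_univ: "(UNIV::bit set) = {0,1}" by (auto intro: bit.exhaust)
lemma bit_add_self[simp]: "(x::bit) + x = 0" by (cases x) auto
lemma card_bit: "CARD(bit) = 2" by (simp add: bit_univ)
lemma vec_add_self: "(a::bit^'n) + a = 0" by (simp add: vec_eq_iff)
lemma finite_vec_bit[simp, intro]: "finite (UNIV :: (bit^'n) set)"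
  by (rule card_ge_0_finite) (simp add: CARD_vec card_bit)
lemma bit_one_add_one: "(1::bit) + 1 = 0" by simp
declare add_bit_eq_xor[simp del] mult_bit_eq_and[simp del]
lemma bit_mult_cases: "(0::bit) * x = 0" "(1::bit) * x = x" by simp_all

lemma f2dot_add: "f2dot (u + a) s = f2dot u s + f2dot a s"
  unfolding f2dot_def by (simp add: distrib_right sum.distrib)

lemma f2dot_axis: "f2dot (axis k 1) s = s $ k"
proof -
  have "(axis k 1 $ i) * s$i = (if i = k then s$k else 0)" for i by (simp add: axis_def)
  then show ?thesis unfolding f2dot_def by simp
qed

lemma f2dot_zero: "f2dot u 0 = 0" unfolding f2dot_def by simp

lemma char_sum:
  fixes s :: "bit ^ 'n"
  shows "(\<Sum>u\<in>UNIV. (if f2dot u s = 0 then 1 else -1 :: real)) = (if s = 0 then 2^CARD('n) else 0)"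
proof (cases "s = 0")
  case True
  then show ?thesis by (simp add: f2dot_zero CARD_vec card_bit)
next
  case False
  then obtain k where k: "s $ k = 1" by (metis bit_not_zero_iff vec_eq_iff zero_index)
  define a :: "bit^'n" where "a = axis k 1"
  let ?g = "\<lambda>u. (if f2dot u s = 0 then 1 else -1 :: real)"
  have neg: "?g (u + a) = - ?g u" for u
    using k by (cases "f2dot u s") (auto simp: f2dot_add a_def f2dot_axis)
  have "(\<Sum>u\<in>UNIV. ?g u) = (\<Sum>u\<in>UNIV. ?g (u + a))"
    by (rule sum.reindex_bij_witness[of _ "\<lambda>u. u + a" "\<lambda>u. u + a"])
       (auto simp: add.assoc vec_add_self)
  also have "\<dots> = - (\<Sum>u\<in>UNIV. ?g u)" by (simp add: neg sum_negf)
  finally show ?thesis using False by simp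
qed

lemma inversion:
  fixes p :: "bit ^ 'n \<Rightarrow> real"
  shows "(\<Sum>u\<in>UNIV. walsh p u) = 2^CARD('n) * p 0"
proof -
  have "(\<Sum>u\<in>UNIV. walsh p u) = (\<Sum>s\<in>UNIV. p s * (\<Sum>u\<in>UNIV. (if f2dot u s = 0 then 1 else -1 :: real)))"
    unfolding walsh_def by (subst sum.swap) (simp add: sum_distrib_left mult.commute)
  also have "\<dots> = (\<Sum>s\<in>UNIV. if s = (0::bit^'n) then 2^CARD('n) * p 0 else 0)"
    by (intro sum.cong refl) (simp add: char_sum)
  also have "\<dots> = 2^CARD('n) * p 0" by (subst sum.delta) auto
  finally show ?thesis .
qed

lemma walsh_zero: "prob_dist p \<Longrightarrow> walsh p 0 = 1"
  unfolding walsh_def prob_dist_def f2dot_def by simp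

lemma gauge_exists:
  fixes u :: "bit^'n"
  assumes "u \<noteq> 0"
  shows "\<exists>E::bit^'n^'n. invertible E \<and> u \<in> columns E \<and> (\<exists>k. column k E = u)"
proof -
  obtain k where k: "u $ k = 1" using assms by (metis bit_not_zero_iff vec_eq_iff zero_index)
  define E :: "bit^'n^'n" where "E = (\<chi> i j. if j = k then u$i else (if i = j then 1 else 0))"
  have col: "column k E = u" unfolding E_def column_def by (simp add: vec_eq_iff)
  have entry: "(\<Sum>l\<in>UNIV. E $ i $ l * E $ l $ j) = (if i = j then 1 else 0)" for i j
    proof (cases "j = k")
      case False
      then have "(\<Sum>l\<in>UNIV. E $ i $ l * E $ l $ j) = (\<Sum>l\<in>UNIV. if l = j then E $ i $ l else 0)"
        by (intro sum.cong) (auto simp: E_def)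
      then show ?thesis using False by (simp add: E_def)
    next
      case True
      have "(\<Sum>l\<in>UNIV. E $ i $ l * E $ l $ j) = (\<Sum>l\<in>UNIV. (if l = k then u $ i else 0) + (if l \<noteq> k \<and> l = i then u $ i else 0))"
        using True k by (intro sum.cong) (auto simp: E_def)
      also have "\<dots> = u $ i + (if i \<noteq> k then u $ i else 0)"
      proof (cases "i = k")
        case True then show ?thesis by (simp add: sum.distrib)
      next
        case False
        have "(\<Sum>l\<in>UNIV. if l = i \<and> l \<noteq> k then u$i else 0) = (\<Sum>l\<in>UNIV. if l = i then u$i else 0)"
          using False by (intro sum.cong) auto
        then show ?thesis using False by (simp add: sum.distrib conj_commute)
      qed
      finally show ?thesis using True k by auto
    qed
  have EE: "E ** E = mat 1"
    by (simp only: vec_eq_iff matrix_matrix_mult_def mat_def vec_lambda_beta entry) simp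
  have "invertible E" unfolding invertible_right_inverse using EE by blast
  moreover have "u \<in> columns E" unfolding columns_def using col by blast
  ultimately show ?thesis using col by blast
qed
theorem proposition8:
  fixes prho :: "bit ^ 'n \<Rightarrow> real"
    and \<epsilon> :: real
    and t :: nat
    and As :: "nat \<Rightarrow> bit ^ 'n ^ 'n"
    and pminus pplus :: "bit ^ 'n \<Rightarrow> real"
    and Anext :: "bit ^ 'n ^ 'n"
  assumes prho: "prob_dist prho"
    and eps: "\<epsilon> \<ge> 0"
    and gauges: "\<forall>r\<in>{1..t}. invertible (As r)"
    and pminus: "pminus \<in> feasible prho (queried As t)"
      "\<forall>p\<in>feasible prho (queried As t). pminus 0 \<le> p 0"
    and pplus: "pplus \<in> feasible prho (queried As t)"
      "\<forall>p\<in>feasible prho (queried As t). p 0 \<le> pplus 0"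
    and Anext: "Anext \<in> candidates (queried As t)"
      "\<forall>A\<in>candidates (queried As t). score pplus pminus A \<le> score pplus pminus Anext"
    and nonterm: "pplus 0 - pminus 0 > \<epsilon>"
  shows "pplus 0 - pminus 0
           \<le> (\<Sum>u\<in>missing (queried As t). gap pplus pminus u) / 2 ^ CARD('n)
         \<and> (\<Sum>u\<in>missing (queried As t). gap pplus pminus u) / 2 ^ CARD('n)
           \<le> real (card (missing (queried As t))) / 2 ^ CARD('n)
              * Max (gap pplus pminus ` missing (queried As t))
         \<and> score pplus pminus Anext \<ge> Max (gap pplus pminus ` missing (queried As t))
         \<and> Max (gap pplus pminus ` missing (queried As t))
           \<ge> 2 ^ CARD('n) / real (card (missing (queried As t))) * (pplus 0 - pminus 0)"
proof -
  define Q where "Q = queried As t"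
  define M where "M = missing Q"
  define g where "g = gap pplus pminus"
  define D where "D = (\<lambda>u. walsh pplus u - walsh pminus u)"
  define W where "W = pplus 0 - pminus 0"
  define S where "S = (\<Sum>u\<in>M. g u)"
  have N: "(2::real) ^ CARD('n) > 0" by simp
  have pdp: "prob_dist pplus" "prob_dist pminus"
    using pplus(1) pminus(1) by (auto simp: feasible_def)
  have finM: "finite M" by (rule finite_subset[OF subset_UNIV]) simp
  have gnn: "g u \<ge> 0" for u by (simp add: g_def gap_def)
  have "2^CARD('n) * W = (\<Sum>u\<in>UNIV. D u)"
    by (simp add: W_def D_def sum_subtractf inversion right_diff_distrib)
  also have "\<dots> = (\<Sum>u\<in>M. D u)"
  proof (rule sum.mono_neutral_right)
    show "\<forall>u\<in>UNIV - M. D u = 0"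
    proof
      fix u assume "u \<in> UNIV - M"
      then have "u = 0 \<or> u \<in> Q" by (auto simp: M_def missing_def)
      then show "D u = 0"
      proof
        assume "u = 0" then show ?thesis using pdp by (simp add: D_def walsh_zero)
      next
        assume "u \<in> Q" then show ?thesis using pplus(1) pminus(1)
          by (simp add: D_def feasible_def Q_def)
      qed
    qed
  qed auto
  also have "\<dots> \<le> S" unfolding S_def g_def gap_def D_def
    by (rule sum_mono) simp
  finally have WS: "2^CARD('n) * W \<le> S" .
  have c1: "W \<le> S / 2^CARD('n)" using WS N by (simp add: field_simps)
  have Wpos: "W > 0" using nonterm eps by (simp add: W_def)
  have Mne: "M \<noteq> {}"
  proof
    assume "M = {}" then have "S = 0" by (simp add: S_def)
    then show False using WS Wpos N by (smt (verit) mult_pos_pos)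
  qed
  define Mx where "Mx = Max (g ` M)"
  have SM: "S \<le> real (card M) * Mx"
    unfolding S_def Mx_def
    using sum_bounded_above[of M g "Max (g ` M)"] finM by auto
  have c2: "S / 2^CARD('n) \<le> real (card M) / 2^CARD('n) * Mx"
    using SM N by (simp add: field_simps)
  obtain u where u: "u \<in> M" "g u = Mx"
  proof -
    have "Max (g ` M) \<in> g ` M" using finM Mne by (intro Max_in) auto
    then show ?thesis using that unfolding Mx_def by (metis imageE)
  qed
  have u0: "u \<noteq> 0" "u \<notin> Q" using u(1) by (auto simp: M_def missing_def)
  obtain E :: "bit^'n^'n" and k where E: "invertible E" "u \<in> columns E" "column k E = u"
    using gauge_exists[OF u0(1)] by blast
  have Ec: "E \<in> candidates Q" using E u0 by (auto simp: candidates_def)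
  have "Mx = g (column k E)" using u E by simp
  also have "\<dots> \<le> score pplus pminus E" unfolding score_def g_def[symmetric]
    by (rule member_le_sum) (auto simp: gnn)
  also have "\<dots> \<le> score pplus pminus Anext" using Anext(2) Ec Q_def by blast
  finally have c3: "Mx \<le> score pplus pminus Anext" .
  have cpos: "real (card M) > 0" using finM Mne by (simp add: card_gt_0_iff)
  have "2^CARD('n) * W \<le> real (card M) * Mx" using WS SM by linarith
  then have c4: "2 ^ CARD('n) / real (card M) * W \<le> Mx"
    using cpos by (simp add: field_simps)
  show ?thesis using c1 c2 c3 c4
    unfolding W_def S_def Mx_def M_def Q_def g_def by simp
qed

end
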